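(* Let $G$ be a locally compact group acting properly and cocompactly on a smooth manifold $Y$, $T:Y\to Y$ a diffeomorphism commuting with the $G$-action, $M=(Y\times\mathbb R)/\mathbb Z$ the suspension for $n\cdot(y,t)=(T^ny,t-n)$ with classes $[y,t]$, $G$-action $x[y,t]=[xy,t]$ and suspension flow $\varphi_s[y,t]=[y,t+s]$. Let $g\in G$, and assume that for every $n\in\mathbb Z\setminus\{0\}$ the set $Y^{g^{-1}T^n}$ is empty or discrete and $\det(1-D_y(g^{-1}T^n))\neq0$ for all $y\in Y^{g^{-1}T^n}$. For $n\in L_g(\varphi)$ let $$f_n:Y^{g^{-1}T^n}\to\{\text{connected components of }M^{g^{-1}\varphi_n}\},\qquad f_n(y)=\{[y,t]:t\in\mathbb R\}.$$ Then, for $n\in L_g(\varphi)$, the fibres of $f_n$ are finite if and only if $g$ lies in a compact subgroup of $G$.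
   Context: $L_g(\varphi)=\{l\in\mathbb R\setminus\{0\}:\exists m\in M,\ \varphi_l(m)=gm\}$ (for the suspension flow this is a subset of $\mathbb Z\setminus\{0\}$). $M^{g^{-1}\varphi_n}$ is the set of points of $M$ fixed by $g^{-1}\circ\varphi_n$. *)

theory Defs
  imports "HOL-Analysis.Analysis" "HOL-Algebra.Group"
begin

text \<open>A map is smooth on an open set if it is differentiable there and all its
directional derivatives are again smooth (coinductively: derivatives of all orders exist).\<close>
coinductive smooth_on :: "'a::euclidean_space set \<Rightarrow> ('a \<Rightarrow> 'b::euclidean_space) \<Rightarrow> bool" where
  "\<lbrakk> \<forall>x\<in>S. f differentiable (at x);
     \<forall>v. smooth_on S (\<lambda>x. frechet_derivative f (at x) v) \<rbrakk> \<Longrightarrow> smooth_on S f"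

section \<open>Smooth manifolds modelled on R^n (n = CARD('n))\<close>

type_synonym ('y,'n) chart = "'y set \<times> ('y \<Rightarrow> real^'n)"

definition smooth_manifold :: "'y topology \<Rightarrow> ('y,'n::finite) chart set \<Rightarrow> bool" where
  "smooth_manifold Y A \<longleftrightarrow>
     Hausdorff_space Y \<and> second_countable Y \<and>
     (\<Union>(U,\<psi>)\<in>A. U) = topspace Y \<and>
     (\<forall>(U,\<psi>)\<in>A. openin Y U \<and> open (\<psi> ` U) \<and>
        homeomorphic_map (subtopology Y U) (subtopology euclidean (\<psi> ` U)) \<psi>) \<and>
     (\<forall>(U,\<psi>)\<in>A. \<forall>(V,\<phi>)\<in>A. smooth_on (\<psi> ` (U \<inter> V)) (\<phi> \<circ> inv_into U \<psi>))"

definition smooth_map :: "'y topology \<Rightarrow> ('y,'n::finite) chart set \<Rightarrow> ('y \<Rightarrow> 'y) \<Rightarrow> bool" where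
  "smooth_map Y A F \<longleftrightarrow> continuous_map Y Y F \<and>
     (\<forall>(U,\<psi>)\<in>A. \<forall>(V,\<phi>)\<in>A. smooth_on (\<psi> ` (U \<inter> F -` V)) (\<phi> \<circ> F \<circ> inv_into U \<psi>))"

definition diffeomorphism :: "'y topology \<Rightarrow> ('y,'n::finite) chart set \<Rightarrow> ('y \<Rightarrow> 'y) \<Rightarrow> bool" where
  "diffeomorphism Y A F \<longleftrightarrow> bij_betw F (topspace Y) (topspace Y) \<and>
     smooth_map Y A F \<and> smooth_map Y A (inv_into (topspace Y) F)"

definition nondegenerate_fixpoint ::
    "'y topology \<Rightarrow> ('y,'n::finite) chart set \<Rightarrow> ('y \<Rightarrow> 'y) \<Rightarrow> 'y \<Rightarrow> bool" where
  "nondegenerate_fixpoint Y A F y \<longleftrightarrow>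
     (\<forall>(U,\<psi>)\<in>A. y \<in> U \<longrightarrow>
        (\<exists>L. ((\<psi> \<circ> F \<circ> inv_into U \<psi>) has_derivative L) (at (\<psi> y)) \<and>
             det (mat 1 - matrix L) \<noteq> 0))"

definition locally_compact_group :: "('g,'b) monoid_scheme \<Rightarrow> 'g topology \<Rightarrow> bool" where
  "locally_compact_group G Gtop \<longleftrightarrow> group G \<and> topspace Gtop = carrier G \<and>
     continuous_map (prod_topology Gtop Gtop) Gtop (\<lambda>(a,b). a \<otimes>\<^bsub>G\<^esub> b) \<and>
     continuous_map Gtop Gtop (\<lambda>a. inv\<^bsub>G\<^esub> a) \<and>
     Hausdorff_space Gtop \<and> locally_compact_space Gtop"

definition proper_cocompact_smooth_action ::
    "('g,'b) monoid_scheme \<Rightarrow> 'g topology \<Rightarrow> 'y topology \<Rightarrow> ('y,'n::finite) chart set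
     \<Rightarrow> ('g \<Rightarrow> 'y \<Rightarrow> 'y) \<Rightarrow> bool" where
  "proper_cocompact_smooth_action G Gtop Y A act \<longleftrightarrow>
     (\<forall>y\<in>topspace Y. act \<one>\<^bsub>G\<^esub> y = y) \<and>
     (\<forall>a\<in>carrier G. \<forall>b\<in>carrier G. \<forall>y\<in>topspace Y. act (a \<otimes>\<^bsub>G\<^esub> b) y = act a (act b y)) \<and>
     continuous_map (prod_topology Gtop Y) Y (\<lambda>(a,y). act a y) \<and>
     (\<forall>a\<in>carrier G. diffeomorphism Y A (act a)) \<and>
     proper_map (prod_topology Gtop Y) (prod_topology Y Y) (\<lambda>(a,y). (act a y, y)) \<and>
     (\<exists>K. compactin Y K \<and> (\<Union>a\<in>carrier G. act a ` K) = topspace Y)"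

definition int_iter :: "'y set \<Rightarrow> ('y \<Rightarrow> 'y) \<Rightarrow> int \<Rightarrow> 'y \<Rightarrow> 'y" where
  "int_iter S T n = (if 0 \<le> n then T ^^ nat n else inv_into S T ^^ nat (- n))"

definition susp_rel :: "'y set \<Rightarrow> ('y \<Rightarrow> 'y) \<Rightarrow> (('y \<times> real) \<times> ('y \<times> real)) set" where
  "susp_rel S T = {((y,t),(y',t')). y \<in> S \<and> (\<exists>k::int. y' = int_iter S T k y \<and> t' = t - of_int k)}"

definition susp :: "'y set \<Rightarrow> ('y \<Rightarrow> 'y) \<Rightarrow> ('y \<times> real) set set" where
  "susp S T = (S \<times> UNIV) // susp_rel S T"

definition susp_class :: "'y set \<Rightarrow> ('y \<Rightarrow> 'y) \<Rightarrow> 'y \<Rightarrow> real \<Rightarrow> ('y \<times> real) set" where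
  "susp_class S T y t = susp_rel S T `` {(y,t)}"

definition quotient_topology :: "'a topology \<Rightarrow> 'a set set \<Rightarrow> 'a set topology" where
  "quotient_topology X P = topology (\<lambda>U. U \<subseteq> P \<and> openin X (\<Union>U))"

definition susp_top :: "'y topology \<Rightarrow> ('y \<Rightarrow> 'y) \<Rightarrow> ('y \<times> real) set topology" where
  "susp_top Y T = quotient_topology (prod_topology Y euclideanreal) (susp (topspace Y) T)"

definition susp_flow :: "real \<Rightarrow> ('y \<times> real) set \<Rightarrow> ('y \<times> real) set" where
  "susp_flow s m = (\<lambda>(y,t). (y, t + s)) ` m"

definition susp_act :: "('g \<Rightarrow> 'y \<Rightarrow> 'y) \<Rightarrow> 'g \<Rightarrow> ('y \<times> real) set \<Rightarrow> ('y \<times> real) set" where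
  "susp_act act a m = (\<lambda>(y,t). (act a y, t)) ` m"

definition L_set :: "'y topology \<Rightarrow> ('y \<Rightarrow> 'y) \<Rightarrow> ('g \<Rightarrow> 'y \<Rightarrow> 'y) \<Rightarrow> 'g \<Rightarrow> real set" where
  "L_set Y T act g = {l. l \<noteq> 0 \<and> (\<exists>m\<in>susp (topspace Y) T. susp_flow l m = susp_act act g m)}"

end

theory Submission
  imports Defs
begin


lemma funpow_inv_in:
  assumes "bij_betw T S S" "y \<in> S" shows "(inv_into S T ^^ j) y \<in> S"
  using assms by (induction j) (auto simp: bij_betw_def inv_into_into)

lemma funpow_T_in:
  assumes "bij_betw T S S" "y \<in> S" shows "(T ^^ j) y \<in> S"
  using assms by (induction j) (auto simp: bij_betw_def)

lemma I_in:
  assumes "bij_betw T S S" "y \<in> S" shows "int_iter S T k y \<in> S"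
  using funpow_inv_in[OF assms] funpow_T_in[OF assms] by (simp add: int_iter_def)

lemma I_0[simp]: "int_iter S T 0 y = y"
  by (simp add: int_iter_def)

lemma I_succ:
  assumes b: "bij_betw T S S" and y: "y \<in> S"
  shows "int_iter S T (k+1) y = T (int_iter S T k y)"
proof (cases "0 \<le> k")
  case True
  then have "nat (k+1) = Suc (nat k)" by simp
  then show ?thesis using True by (simp add: int_iter_def)
next
  case False
  define m where "m = nat (-k) - 1"
  have e1: "nat (-k) = Suc m" using False m_def by simp
  show ?thesis
  proof (cases "k = -1")
    case True
    then show ?thesis using b y
      by (simp add: int_iter_def bij_betw_def f_inv_into_f)
  next
    case False2: False
    have "nat (-(k+1)) = m" using False m_def by simp
    moreover have "\<not> 0 \<le> k+1" using False False2 by simp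
    moreover have "(inv_into S T ^^ m) y \<in> S" using funpow_inv_in[OF b y] .
    ultimately show ?thesis using False b e1
      by (simp add: int_iter_def bij_betw_def f_inv_into_f)
  qed
qed

lemma I_pred:
  assumes b: "bij_betw T S S" and y: "y \<in> S"
  shows "int_iter S T (k-1) y = inv_into S T (int_iter S T k y)"
proof (cases "0 < k")
  case True
  define m where "m = nat k - 1"
  have e1: "nat k = Suc m" using True m_def by simp
  have "nat (k - 1) = m" using True m_def by simp
  moreover have "(T ^^ m) y \<in> S" using funpow_T_in[OF b y] .
  ultimately show ?thesis using True b e1
    by (simp add: int_iter_def bij_betw_def inv_into_f_f)
next
  case False
  then have "nat (-(k-1)) = Suc (nat (-k))" by simp
  then show ?thesis using False by (simp add: int_iter_def)
qed

lemma I_add: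
  assumes b: "bij_betw T S S" and y: "y \<in> S"
  shows "int_iter S T (a+b') y = int_iter S T a (int_iter S T b' y)"
proof (induction a rule: int_induct[where k=0])
  case base then show ?case by simp
next
  case (step1 i)
  have "int_iter S T (i + 1 + b') y = int_iter S T ((i + b') + 1) y" by (simp add: algebra_simps)
  also have "\<dots> = T (int_iter S T (i+b') y)" using I_succ[OF b y] .
  also have "\<dots> = int_iter S T (i+1) (int_iter S T b' y)"
    using step1 I_succ[OF b I_in[OF b y]] by simp
  finally show ?case .
next
  case (step2 i)
  have "int_iter S T (i - 1 + b') y = int_iter S T ((i + b') - 1) y" by (simp add: algebra_simps)
  also have "\<dots> = inv_into S T (int_iter S T (i+b') y)" using I_pred[OF b y] .
  also have "\<dots> = int_iter S T (i-1) (int_iter S T b' y)"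
    using step2 I_pred[OF b I_in[OF b y]] by simp
  finally show ?case .
qed

lemma I_cancel:
  assumes b: "bij_betw T S S" and y: "y \<in> S"
  shows "int_iter S T (-k) (int_iter S T k y) = y"
  using I_add[OF b y, of "-k" k] by simp

lemma I_cont:
  assumes b: "bij_betw T (topspace Y) (topspace Y)"
    and c1: "continuous_map Y Y T" and c2: "continuous_map Y Y (inv_into (topspace Y) T)"
  shows "continuous_map Y Y (int_iter (topspace Y) T k)"
proof (induction k rule: int_induct[where k=0])
  case base
  then show ?case by (simp add: int_iter_def)
next
  case (step1 i)
  have "continuous_map Y Y (T \<circ> int_iter (topspace Y) T i)"
    using step1 c1 continuous_map_compose by blast
  then show ?case
    by (rule continuous_map_eq) (simp add: I_succ[OF b])
next
  case (step2 i)
  have "continuous_map Y Y (inv_into (topspace Y) T \<circ> int_iter (topspace Y) T i)"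
    using step2 c2 continuous_map_compose by blast
  then show ?case
    by (rule continuous_map_eq) (simp add: I_pred[OF b])
qed

lemma inv_comm:
  assumes b: "bij_betw T S S" and y: "y \<in> S"
    and aS: "\<And>z. z \<in> S \<Longrightarrow> F z \<in> S"
    and comm: "\<And>z. z \<in> S \<Longrightarrow> T (F z) = F (T z)"
  shows "inv_into S T (F y) = F (inv_into S T y)"
proof -
  have z: "inv_into S T y \<in> S" using b y by (metis bij_betw_def inv_into_into)
  have "T (inv_into S T y) = y" using b y by (simp add: bij_betw_def f_inv_into_f)
  then have "T (F (inv_into S T y)) = F y" using comm[OF z] by simp
  then have "inv_into S T (F y) = inv_into S T (T (F (inv_into S T y)))" by simp
  also have "\<dots> = F (inv_into S T y)" using b aS[OF z] by (simp add: bij_betw_def inv_into_f_f)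
  finally show ?thesis .
qed

lemma I_comm:
  assumes b: "bij_betw T S S" and y: "y \<in> S"
    and aS: "\<And>z. z \<in> S \<Longrightarrow> F z \<in> S"
    and comm: "\<And>z. z \<in> S \<Longrightarrow> T (F z) = F (T z)"
  shows "int_iter S T k (F y) = F (int_iter S T k y)"
proof (induction k rule: int_induct[where k=0])
  case base then show ?case by simp
next
  case (step1 i)
  then show ?case using I_succ[OF b aS[OF y]] I_succ[OF b y] comm[OF I_in[OF b y]] by simp
next
  case (step2 i)
  then show ?case using I_pred[OF b aS[OF y]] I_pred[OF b y]
      inv_comm[where F=F, OF b I_in[OF b y, of i] aS comm] by simp
qed




lemma susp_equiv:
  assumes b: "bij_betw T S S"
  shows "equiv (S \<times> UNIV) (susp_rel S T)"
proof (rule equivI)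
  show "susp_rel S T \<subseteq> (S \<times> UNIV) \<times> S \<times> UNIV"
    by (auto simp: susp_rel_def I_in[OF b])
  show "refl_on (S \<times> UNIV) (susp_rel S T)"
    unfolding refl_on_def susp_rel_def
    by (auto intro!: exI[of _ 0] I_in[OF b])
  show "sym (susp_rel S T)"
  proof (rule symI)
    fix a c assume "(a,c) \<in> susp_rel S T"
    then obtain y t k where y: "y \<in> S" and a: "a = (y,t)" and c: "c = (int_iter S T k y, t - of_int k)"
      by (cases a, cases c) (auto simp: susp_rel_def)
    show "(c,a) \<in> susp_rel S T"
      using I_in[OF b y] I_cancel[OF b y, of k] a c
      by (auto simp: susp_rel_def intro!: exI[of _ "-k"])
  qed
  show "trans (susp_rel S T)"
  proof (rule transI)
    fix a c d assume "(a,c) \<in> susp_rel S T" "(c,d) \<in> susp_rel S T"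
    then obtain y t k k' where y: "y \<in> S" and a: "a = (y,t)" and c: "c = (int_iter S T k y, t - of_int k)"
       and d: "d = (int_iter S T k' (int_iter S T k y), t - of_int k - of_int k')"
      by (cases a, cases c, cases d) (auto simp: susp_rel_def)
    show "(a,d) \<in> susp_rel S T"
      using I_add[OF b y, of k' k] a d y
      by (auto simp: susp_rel_def intro!: exI[of _ "k'+k"])
  qed
qed

lemma mem_class:
  "(y',t') \<in> susp_class S T y t \<longleftrightarrow> y \<in> S \<and> (\<exists>k. y' = int_iter S T k y \<and> t' = t - of_int k)"
  by (simp add: susp_class_def susp_rel_def)

lemma class_eq:
  assumes b: "bij_betw T S S" and y: "y \<in> S" and y': "y' \<in> S"
  shows "susp_class S T y t = susp_class S T y' t' \<longleftrightarrow> (\<exists>k. y' = int_iter S T k y \<and> t' = t - of_int k)"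
proof -
  have "((y,t),(y',t')) \<in> susp_rel S T \<longleftrightarrow> susp_class S T y t = susp_class S T y' t'"
    using equiv_class_eq_iff[OF susp_equiv[OF b], of "(y,t)" "(y',t')"] y y'
    by (simp add: susp_class_def)
  then show ?thesis using y by (simp add: susp_rel_def)
qed

lemma class_in_M:
  assumes "y \<in> S" shows "susp_class S T y t \<in> susp S T"
  using assms unfolding susp_def susp_class_def by (intro quotientI) auto

lemma M_cases:
  assumes "m \<in> susp S T"
  obtains y t where "y \<in> S" "m = susp_class S T y t"
  using assms unfolding susp_def susp_class_def by (auto elim!: quotientE)

lemma class_of_mem:
  assumes b: "bij_betw T S S" and m: "m \<in> susp S T" and p: "(w,s) \<in> m"
  shows "m = susp_class S T w s" "w \<in> S"
proof -
  obtain y t where y: "y \<in> S" and me: "m = susp_class S T y t" using m by (rule M_cases)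
  have "((y,t),(w,s)) \<in> susp_rel S T" using p me by (simp add: susp_class_def)
  then show "m = susp_class S T w s" "w \<in> S"
    using equiv_class_eq_iff[OF susp_equiv[OF b], of "(y,t)" "(w,s)"] me
    by (auto simp: susp_class_def)
qed

lemma self_in_class:
  assumes b: "bij_betw T S S" and y: "y \<in> S"
  shows "(y,t) \<in> susp_class S T y t"
  using y by (simp add: mem_class exI[of _ 0])

lemma flow_class:
  "susp_flow s (susp_class S T y t) = susp_class S T y (t+s)"
  unfolding susp_flow_def
proof (rule Set.set_eqI, rule iffI)
  fix p assume "p \<in> (\<lambda>(y, t). (y, t + s)) ` susp_class S T y t"
  then show "p \<in> susp_class S T y (t + s)" by (auto simp: mem_class)
next
  fix p assume "p \<in> susp_class S T y (t + s)"
  then obtain k where "y \<in> S" "p = (int_iter S T k y, t + s - of_int k)"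
    by (cases p) (auto simp: mem_class)
  then show "p \<in> (\<lambda>(y, t). (y, t + s)) ` susp_class S T y t"
    by (intro image_eqI[of _ _ "(int_iter S T k y, t - of_int k)"]) (auto simp: mem_class)
qed

lemma act_class:
  assumes b: "bij_betw T S S" and y: "y \<in> S"
    and aS: "\<And>z. z \<in> S \<Longrightarrow> F z \<in> S"
    and comm: "\<And>z. z \<in> S \<Longrightarrow> T (F z) = F (T z)"
  shows "(\<lambda>(y,t). (F y, t)) ` susp_class S T y t = susp_class S T (F y) t"
proof (rule Set.set_eqI, rule iffI)
  fix p assume "p \<in> (\<lambda>(y,t). (F y, t)) ` susp_class S T y t"
  then show "p \<in> susp_class S T (F y) t"
    using I_comm[where F=F, OF b y aS comm] aS[OF y] by (auto simp: mem_class)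
next
  fix p assume "p \<in> susp_class S T (F y) t"
  then obtain k where "p = (int_iter S T k (F y), t - of_int k)"
    by (cases p) (auto simp: mem_class)
  then show "p \<in> (\<lambda>(y,t). (F y, t)) ` susp_class S T y t"
    using I_comm[where F=F, OF b y aS comm] y
    by (intro image_eqI[of _ _ "(int_iter S T k y, t - of_int k)"]) (auto simp: mem_class)
qed




lemma quot_istop:
  assumes disj: "\<And>p p'. p \<in> P \<Longrightarrow> p' \<in> P \<Longrightarrow> p \<inter> p' \<noteq> {} \<Longrightarrow> p = p'"
  shows "istopology (\<lambda>U. U \<subseteq> P \<and> openin X (\<Union>U))"
  unfolding istopology_def
proof (rule conjI; intro allI impI)
  fix S T assume S: "S \<subseteq> P \<and> openin X (\<Union>S)" and T: "T \<subseteq> P \<and> openin X (\<Union>T)"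
  have "\<Union>(S \<inter> T) = \<Union>S \<inter> \<Union>T"
  proof
    show "\<Union>S \<inter> \<Union>T \<subseteq> \<Union>(S \<inter> T)"
    proof
      fix x assume "x \<in> \<Union>S \<inter> \<Union>T"
      then obtain p p' where h: "x \<in> p" "p \<in> S" "x \<in> p'" "p' \<in> T" by blast
      then have "p = p'" using disj[of p p'] S T by blast
      then show "x \<in> \<Union>(S \<inter> T)" using h by blast
    qed
  qed blast
  then show "S \<inter> T \<subseteq> P \<and> openin X (\<Union>(S \<inter> T))" using S T by auto
next
  fix K assume K: "\<forall>U\<in>K. U \<subseteq> P \<and> openin X (\<Union>U)"
  have e: "\<Union>(\<Union>K) = \<Union>((\<lambda>U. \<Union>U) ` K)" by blast
  have "openin X (\<Union>((\<lambda>U. \<Union>U) ` K))" using K by (intro openin_Union) auto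
  then show "\<Union>K \<subseteq> P \<and> openin X (\<Union>(\<Union>K))" using K e by auto
qed

lemma quot_openin:
  assumes disj: "\<And>p p'. p \<in> P \<Longrightarrow> p' \<in> P \<Longrightarrow> p \<inter> p' \<noteq> {} \<Longrightarrow> p = p'"
  shows "openin (quotient_topology X P) U \<longleftrightarrow> U \<subseteq> P \<and> openin X (\<Union>U)"
  unfolding quotient_topology_def using quot_istop[OF disj] by simp

lemma quot_topspace:
  assumes disj: "\<And>p p'. p \<in> P \<Longrightarrow> p' \<in> P \<Longrightarrow> p \<inter> p' \<noteq> {} \<Longrightarrow> p = p'"
    and cover: "\<Union>P = topspace X"
  shows "topspace (quotient_topology X P) = P"
proof -
  have "openin (quotient_topology X P) P" using cover by (simp add: quot_openin[OF disj])
  then have "P \<subseteq> topspace (quotient_topology X P)" by (rule openin_subset)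
  moreover have "topspace (quotient_topology X P) \<subseteq> P"
    unfolding topspace_def by (auto simp: quot_openin[OF disj])
  ultimately show ?thesis by blast
qed

lemma quot_cont:
  assumes disj: "\<And>p p'. p \<in> P \<Longrightarrow> p' \<in> P \<Longrightarrow> p \<inter> p' \<noteq> {} \<Longrightarrow> p = p'"
    and cover: "\<Union>P = topspace X"
    and q: "\<And>x. x \<in> topspace X \<Longrightarrow> q x \<in> P \<and> x \<in> q x"
  shows "continuous_map X (quotient_topology X P) q"
  unfolding continuous_map_def
proof (intro conjI allI impI)
  show "q \<in> topspace X \<rightarrow> topspace (quotient_topology X P)"
    using q quot_topspace[OF disj cover] by auto
next
  fix U assume U: "openin (quotient_topology X P) U"
  then have U': "U \<subseteq> P" "openin X (\<Union>U)" by (auto simp: quot_openin[OF disj])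
  have "{x \<in> topspace X. q x \<in> U} = \<Union>U"
  proof
    show "{x \<in> topspace X. q x \<in> U} \<subseteq> \<Union>U" using q by blast
    show "\<Union>U \<subseteq> {x \<in> topspace X. q x \<in> U}"
    proof
      fix x assume "x \<in> \<Union>U"
      then obtain p where p: "x \<in> p" "p \<in> U" by blast
      then have xt: "x \<in> topspace X" using U'(1) cover by blast
      then have "q x = p" using disj[of "q x" p] q[OF xt] p U'(1) by blast
      then show "x \<in> {x \<in> topspace X. q x \<in> U}" using xt p by simp
    qed
  qed
  then show "openin X {x \<in> topspace X. q x \<in> U}" using U' by simp
qed




locale susp_setting =
  fixes G :: "('g,'b) monoid_scheme" and Gtop :: "'g topology"
    and Y :: "'y topology" and act :: "'g \<Rightarrow> 'y \<Rightarrow> 'y" and T :: "'y \<Rightarrow> 'y" and g :: 'g and n :: int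
  assumes grp: "group G"
    and gtop: "topspace Gtop = carrier G" and HG: "Hausdorff_space Gtop"
    and HY: "Hausdorff_space Y"
    and bT: "bij_betw T (topspace Y) (topspace Y)"
    and cT: "continuous_map Y Y T" and cTi: "continuous_map Y Y (inv_into (topspace Y) T)"
    and act1: "\<forall>y\<in>topspace Y. act \<one>\<^bsub>G\<^esub> y = y"
    and actm: "\<forall>a\<in>carrier G. \<forall>b\<in>carrier G. \<forall>y\<in>topspace Y. act (a \<otimes>\<^bsub>G\<^esub> b) y = act a (act b y)"
    and actc: "continuous_map (prod_topology Gtop Y) Y (\<lambda>(a,y). act a y)"
    and prp: "proper_map (prod_topology Gtop Y) (prod_topology Y Y) (\<lambda>(a,y). (act a y, y))"
    and T_comm: "\<forall>a\<in>carrier G. \<forall>y\<in>topspace Y. T (act a y) = act a (T y)"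
    and g_in: "g \<in> carrier G"
    and disc: "{y \<in> topspace Y. act (inv\<^bsub>G\<^esub> g) (int_iter (topspace Y) T n y) = y} = {} \<or>
       subtopology Y {y \<in> topspace Y. act (inv\<^bsub>G\<^esub> g) (int_iter (topspace Y) T n y) = y}
         = discrete_topology {y \<in> topspace Y. act (inv\<^bsub>G\<^esub> g) (int_iter (topspace Y) T n y) = y}"
    and nL: "real_of_int n \<in> L_set Y T act g"
begin

abbreviation "S \<equiv> topspace Y"
abbreviation "I \<equiv> int_iter (topspace Y) T"
abbreviation "gi \<equiv> inv\<^bsub>G\<^esub> g"
abbreviation "FixY \<equiv> {y \<in> topspace Y. act (inv\<^bsub>G\<^esub> g) (int_iter (topspace Y) T n y) = y}"
abbreviation "M \<equiv> susp (topspace Y) T"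
abbreviation "FixM \<equiv> {m \<in> susp (topspace Y) T. susp_act act (inv\<^bsub>G\<^esub> g) (susp_flow (of_int n) m) = m}"
abbreviation "cl \<equiv> susp_class (topspace Y) T"
abbreviation "f \<equiv> (\<lambda>y. {susp_class (topspace Y) T y t | t. True})"

lemma actS: "a \<in> carrier G \<Longrightarrow> y \<in> S \<Longrightarrow> act a y \<in> S"
  using actc gtop unfolding continuous_map_def by (force simp: Pi_iff)

lemma act_cont: "y \<in> S \<Longrightarrow> continuous_map Gtop Y (\<lambda>a. act a y)"
proof -
  assume y: "y \<in> S"
  have "continuous_map Gtop (prod_topology Gtop Y) (\<lambda>a. (a, y))"
    using y by (intro continuous_map_pairedI) auto
  from continuous_map_compose[OF this actc] show ?thesis by (simp add: o_def)
qed

lemma act_cont2: "a \<in> carrier G \<Longrightarrow> continuous_map Y Y (act a)"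
proof -
  assume a: "a \<in> carrier G"
  have "continuous_map Y (prod_topology Gtop Y) (\<lambda>y. (a, y))"
    using a gtop by (intro continuous_map_pairedI) auto
  from continuous_map_compose[OF this actc] show ?thesis by (simp add: o_def)
qed

lemma I_act: "a \<in> carrier G \<Longrightarrow> y \<in> S \<Longrightarrow> I k (act a y) = act a (I k y)"
  using I_comm[where F="act a", OF bT _ actS] T_comm by blast

lemma act_class': "a \<in> carrier G \<Longrightarrow> y \<in> S \<Longrightarrow> susp_act act a (cl y t) = cl (act a y) t"
  unfolding susp_act_def using act_class[where F="act a", OF bT _ actS] T_comm by blast

lemma inv_cancel1: "a \<in> carrier G \<Longrightarrow> y \<in> S \<Longrightarrow> act (inv\<^bsub>G\<^esub> a) (act a y) = y"
  using actm act1 group.l_inv[OF grp] group.inv_closed[OF grp] by metis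

lemma inv_cancel2: "a \<in> carrier G \<Longrightarrow> y \<in> S \<Longrightarrow> act a (act (inv\<^bsub>G\<^esub> a) y) = y"
  using actm act1 group.r_inv[OF grp] group.inv_closed[OF grp] by metis

lemma gi_in: "gi \<in> carrier G" using group.inv_closed[OF grp g_in] .

lemma FixY_g: "y \<in> FixY \<Longrightarrow> act g y = I n y"
proof -
  assume y: "y \<in> FixY"
  then have e: "act gi (I n y) = y" by simp
  have yS: "y \<in> S" using y by simp
  have "act g y = act g (act gi (I n y))" by (simp only: e)
  also have "\<dots> = I n y" by (rule inv_cancel2[OF g_in I_in[OF bT yS]])
  finally show ?thesis .
qed

lemma I_comm2: "y \<in> S \<Longrightarrow> I a (I b y) = I b (I a y)"
  using I_add[OF bT, of y a b] I_add[OF bT, of y b a] by (simp add: add.commute)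

lemma FixY_I: "y \<in> FixY \<Longrightarrow> I k y \<in> FixY"
proof -
  assume y: "y \<in> FixY"
  then have yS: "y \<in> S" by simp
  have "act gi (I n (I k y)) = act gi (I k (I n y))" using I_comm2[OF yS] by simp
  also have "\<dots> = I k (act gi (I n y))" using I_act[OF gi_in I_in[OF bT yS]] by simp
  also have "\<dots> = I k y" using y by simp
  finally show ?thesis using I_in[OF bT yS] by simp
qed

lemma class_FixM: "y \<in> S \<Longrightarrow> cl y t \<in> FixM \<longleftrightarrow> y \<in> FixY"
proof -
  assume y: "y \<in> S"
  have gy: "act gi y \<in> S" using actS[OF gi_in y] .
  have "susp_act act gi (susp_flow (of_int n) (cl y t)) = cl (act gi y) (t + of_int n)"
    by (simp add: flow_class act_class'[OF gi_in y])
  then have "cl y t \<in> FixM \<longleftrightarrow> cl (act gi y) (t + of_int n) = cl y t"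
    using class_in_M[OF y] by simp
  also have "\<dots> \<longleftrightarrow> (\<exists>k. y = I k (act gi y) \<and> t = t + of_int n - of_int k)"
    by (rule class_eq[OF bT gy y])
  also have "\<dots> \<longleftrightarrow> y = I n (act gi y)" by auto
  also have "\<dots> \<longleftrightarrow> y \<in> FixY" using I_act[OF gi_in y] y by auto
  finally show ?thesis .
qed

lemma FixM_cases:
  assumes "m \<in> FixM" obtains y t where "y \<in> FixY" "m = cl y t"
proof -
  obtain y t where y: "y \<in> S" "m = cl y t" using assms by (auto elim: M_cases)
  then show ?thesis using that class_FixM[OF y(1)] assms by auto
qed

lemma f_I: "y \<in> S \<Longrightarrow> f (I (k::int) y) = f y"
proof -
  assume y: "y \<in> S"
  have "cl (I k y) t = cl y (t + real_of_int k)" for t :: real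
    using class_eq[OF bT y I_in[OF bT y, of k], of "t + real_of_int k" t] by auto
  note h = this
  show ?thesis
  proof (rule Set.set_eqI, rule iffI)
    fix m assume "m \<in> f (I k y)" then obtain t where "m = cl (I k y) t" by auto
    then show "m \<in> f y" using h by auto
  next
    fix m assume "m \<in> f y" then obtain t where "m = cl y t" by auto
    then have "m = cl (I k y) (t - real_of_int k)" using h[of "t - real_of_int k"] by simp
    then show "m \<in> f (I k y)" by auto
  qed
qed

lemma f_eq: "y \<in> S \<Longrightarrow> y' \<in> S \<Longrightarrow> f y' = f y \<Longrightarrow> \<exists>k. y' = I k y"
proof -
  assume y: "y \<in> S" and y': "y' \<in> S" and e: "f y' = f y"
  have "cl y 0 \<in> f y'" using e by auto
  then obtain t where "cl y 0 = cl y' t" by blast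
  then show ?thesis using class_eq[OF bT y y'] by auto
qed

lemma pow_act: "y \<in> FixY \<Longrightarrow> act (g [^]\<^bsub>G\<^esub> j) y = I (n * int j) y"
proof (induction j)
  case 0
  then show ?case using act1 by simp
next
  case (Suc j)
  have yS: "y \<in> S" using Suc by simp
  have "act (g [^]\<^bsub>G\<^esub> Suc j) y = act g (act (g [^]\<^bsub>G\<^esub> j) y)"
    using monoid.nat_pow_Suc2[OF group.is_monoid[OF grp] g_in] actm
      monoid.nat_pow_closed[OF group.is_monoid[OF grp] g_in] g_in yS by simp
  also have "\<dots> = act g (I (n * int j) y)" using Suc by simp
  also have "\<dots> = I (n * int j) (act g y)" using I_act[OF g_in yS] by simp
  also have "\<dots> = I (n * int j) (I n y)" using FixY_g[OF Suc.prems] by simp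
  also have "\<dots> = I (n * int (Suc j)) y" using I_add[OF bT yS, of "n * int j" n]
    by (simp add: algebra_simps)
  finally show ?case .
qed

lemma n_nz: "n \<noteq> 0" using nL by (simp add: L_set_def)

lemma exists_fix: "\<exists>y0. y0 \<in> FixY"
proof -
  obtain m where m: "m \<in> M" "susp_flow (of_int n) m = susp_act act g m"
    using nL by (auto simp: L_set_def)
  obtain y t where y: "y \<in> S" "m = cl y t" using m(1) by (rule M_cases)
  have "cl y (t + of_int n) = cl (act g y) t"
    using m(2) y by (simp add: flow_class act_class'[OF g_in])
  then obtain k where k: "act g y = I k y" "t = t + of_int n - of_int k"
    using class_eq[OF bT y(1) actS[OF g_in y(1)]] by auto
  then have "act g y = I n y" by simp
  then have "act gi (I n y) = y" using inv_cancel1[OF g_in y(1)] by simp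
  then show ?thesis using y by auto
qed

lemma periodic_finite:
  assumes y: "y \<in> S" and p: "I p y = y" "p \<noteq> 0"
  shows "finite (range (\<lambda>k. I k y))"
proof -
  define P where "P = \<bar>p\<bar>"
  have P0: "P > 0" using p by (simp add: P_def)
  have IP: "I P y = y"
  proof (cases "p \<ge> 0")
    case True then show ?thesis using p by (simp add: P_def)
  next
    case False
    then have "I P y = I (-p) (I p y)" using p by (simp add: P_def)
    also have "\<dots> = y" using I_cancel[OF bT y] .
    finally show ?thesis .
  qed
  have mult: "I (P * j) y = y" for j
  proof (induction j rule: int_induct[where k=0])
    case base then show ?case by simp
  next
    case (step1 i)
    have "I (P * (i+1)) y = I (P*i) (I P y)" using I_add[OF bT y, of "P*i" P] by (simp add: algebra_simps)
    then show ?case using IP step1 by simp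
  next
    case (step2 i)
    have "I (P * (i - 1)) y = I (-P) (I (P*i) y)" using I_add[OF bT y, of "-P" "P*i"] by (simp add: algebra_simps)
    also have "\<dots> = I (-P) (I P y)" using step2 IP by simp
    also have "\<dots> = y" using I_cancel[OF bT y] .
    finally show ?case .
  qed
  have "range (\<lambda>k. I k y) \<subseteq> (\<lambda>k. I k y) ` {0..<P}"
  proof
    fix z assume "z \<in> range (\<lambda>k. I k y)"
    then obtain k where z: "z = I k y" by auto
    have "I k y = I (k mod P) (I (P * (k div P)) y)"
      using I_add[OF bT y, of "k mod P" "P * (k div P)"] by (simp add: mult.commute)
    also have "\<dots> = I (k mod P) y" using mult by simp
    finally show "z \<in> (\<lambda>k. I k y) ` {0..<P}" using z P0 by auto
  qed
  then show ?thesis using finite_subset by blast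
qed

end



context susp_setting
begin

abbreviation "X \<equiv> prod_topology Y euclideanreal"
abbreviation "Q \<equiv> susp_top Y T"

lemma Mdisj: "p \<in> M \<Longrightarrow> p' \<in> M \<Longrightarrow> p \<inter> p' \<noteq> {} \<Longrightarrow> p = p'"
  using quotient_disj[OF susp_equiv[OF bT]] unfolding susp_def by blast

lemma Mcover: "\<Union>M = topspace X"
  using Union_quotient[OF susp_equiv[OF bT]] unfolding susp_def by simp

lemma Q_open: "openin Q U \<longleftrightarrow> U \<subseteq> M \<and> openin X (\<Union>U)"
  unfolding susp_top_def by (rule quot_openin[OF Mdisj])

lemma Q_top: "topspace Q = M"
  unfolding susp_top_def by (rule quot_topspace[OF Mdisj Mcover])

lemma q_cont: "continuous_map X Q (\<lambda>(y,t). cl y t)"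
  unfolding susp_top_def
proof (rule quot_cont[OF Mdisj Mcover])
  fix x assume "x \<in> topspace X"
  then obtain y t where "x = (y,t)" "y \<in> S" by auto
  then show "(case x of (y, t) \<Rightarrow> cl y t) \<in> M \<and> x \<in> (case x of (y, t) \<Rightarrow> cl y t)"
    using class_in_M self_in_class[OF bT] by auto
qed

lemma disc': "FixY \<noteq> {} \<Longrightarrow> subtopology Y FixY = discrete_topology FixY"
  using disc by blast

lemma fix_open:
  assumes y: "y \<in> FixY"
  shows "openin (subtopology Q FixM) (f y)"
proof -
  have ne: "FixY \<noteq> {}" using y by blast
  have D: "subtopology Y FixY = discrete_topology FixY" by (rule disc'[OF ne])
  have "openin (discrete_topology FixY) {y}" unfolding openin_discrete_topology using y by blast
  then have "openin (subtopology Y FixY) {y}" by (simp only: D)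
  then obtain V where V: "openin Y V" "{y} = V \<inter> FixY" by (auto simp: openin_subtopology)
  define U where "U = {m \<in> M. \<exists>p\<in>m. fst p \<in> V}"
  have UU: "\<Union>U = (\<Union>k. {p \<in> topspace X. I k (fst p) \<in> V})"
  proof
    show "\<Union>U \<subseteq> (\<Union>k. {p \<in> topspace X. I k (fst p) \<in> V})"
    proof
      fix p assume "p \<in> \<Union>U"
      then obtain m where m: "m \<in> M" "p \<in> m" "\<exists>p\<in>m. fst p \<in> V" by (auto simp: U_def)
      then obtain w s where ws: "(w,s) \<in> m" "w \<in> V" by auto
      have pX: "p \<in> topspace X" using m Mcover by blast
      have "m = cl (fst p) (snd p)" using class_of_mem[OF bT m(1), of "fst p" "snd p"] m by simp
      then obtain k where "w = I k (fst p)" using ws by (auto simp: mem_class)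
      then show "p \<in> (\<Union>k. {p \<in> topspace X. I k (fst p) \<in> V})" using pX ws by auto
    qed
    show "(\<Union>k. {p \<in> topspace X. I k (fst p) \<in> V}) \<subseteq> \<Union>U"
    proof
      fix p assume "p \<in> (\<Union>k. {p \<in> topspace X. I k (fst p) \<in> V})"
      then obtain k where k: "p \<in> topspace X" "I k (fst p) \<in> V" by auto
      obtain z s where p: "p = (z,s)" "z \<in> S" using k by (cases p) auto
      have "cl z s \<in> U"
        unfolding U_def using class_in_M[OF p(2)] k p
        by (auto simp: mem_class intro!: bexI[of _ "(I k z, s - of_int k)"])
      moreover have "p \<in> cl z s" using self_in_class[OF bT p(2)] p by simp
      ultimately show "p \<in> \<Union>U" by blast
    qed
  qed
  have "openin X (\<Union>U)"
    unfolding UU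
  proof (rule openin_Union)
    fix W assume "W \<in> range (\<lambda>k. {p \<in> topspace X. I k (fst p) \<in> V})"
    then obtain k where W: "W = {p \<in> topspace X. I k (fst p) \<in> V}" by blast
    have "continuous_map X Y (I k \<circ> fst)"
      using continuous_map_compose[OF continuous_map_fst I_cont[OF bT cT cTi]] by blast
    from openin_continuous_map_preimage[OF this V(1)]
    show "openin X W" unfolding W by simp
  qed
  then have Uo: "openin Q U" unfolding Q_open U_def by auto
  have "f y = U \<inter> FixM"
  proof
    show "U \<inter> FixM \<subseteq> f y"
    proof
      fix m assume m: "m \<in> U \<inter> FixM"
      then obtain w s where ws: "(w,s) \<in> m" "w \<in> V" by (auto simp: U_def)
      have mM: "m \<in> M" using m by simp
      have mw: "m = cl w s" "w \<in> S" using class_of_mem[OF bT mM ws(1)] by auto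
      then have "w \<in> FixY" using class_FixM[OF mw(2), of s] m by simp
      then have "w = y" using V(2) ws(2) by blast
      then show "m \<in> f y" using mw by auto
    qed
    show "f y \<subseteq> U \<inter> FixM"
    proof
      fix m assume "m \<in> f y"
      then obtain t where t: "m = cl y t" by auto
      have yS: "y \<in> S" using y by simp
      have "m \<in> FixM" using class_FixM[OF yS, of t] y t by simp
      moreover have "m \<in> U"
        unfolding U_def using class_in_M[OF yS] t self_in_class[OF bT yS, of t] V(2)
        by (auto intro!: bexI[of _ "(y,t)"])
      ultimately show "m \<in> U \<inter> FixM" by blast
    qed
  qed
  then show ?thesis using Uo by (auto simp: openin_subtopology)
qed

lemma comp:
  assumes y0: "y0 \<in> FixY"
  shows "f y0 \<in> connected_components_of (subtopology Q FixM)"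
proof -
  define Z where "Z = subtopology Q FixM"
  have y0S: "y0 \<in> S" using y0 by simp
  have tZ: "topspace Z = FixM" using Q_top by (auto simp: Z_def)
  have sub: "f y0 \<subseteq> FixM" using class_FixM[OF y0S] y0 by auto
  have "continuous_map euclideanreal X (\<lambda>t. (y0,t))"
    using y0S by (intro continuous_map_pairedI) auto
  from continuous_map_compose[OF this q_cont]
  have "continuous_map euclideanreal Q (\<lambda>t. cl y0 t)" by (simp add: o_def)
  from connectedin_continuous_map_image[OF this, of UNIV]
  have "connectedin Q (range (\<lambda>t. cl y0 t))" by simp
  moreover have "range (\<lambda>t. cl y0 t) = f y0" by auto
  ultimately have conn: "connectedin Z (f y0)" using sub by (simp add: Z_def connectedin_subtopology)
  have op: "openin Z (f y0)" unfolding Z_def by (rule fix_open[OF y0])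
  have eq: "FixM - f y0 = \<Union>{f y | y. y \<in> FixY \<and> f y \<noteq> f y0}"
  proof
    show "FixM - f y0 \<subseteq> \<Union>{f y | y. y \<in> FixY \<and> f y \<noteq> f y0}"
    proof
      fix m assume m: "m \<in> FixM - f y0"
      have mF: "m \<in> FixM" using m by blast
      obtain y t where yt: "y \<in> FixY" "m = cl y t" by (rule FixM_cases[OF mF])
      then have "m \<in> f y" by auto
      have "m \<notin> f y0" using m by blast
      then have "f y \<noteq> f y0" using \<open>m \<in> f y\<close> by blast
      then show "m \<in> \<Union>{f y | y. y \<in> FixY \<and> f y \<noteq> f y0}" using yt \<open>m \<in> f y\<close> by blast
    qed
    show "\<Union>{f y | y. y \<in> FixY \<and> f y \<noteq> f y0} \<subseteq> FixM - f y0"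
    proof
      fix m assume "m \<in> \<Union>{f y | y. y \<in> FixY \<and> f y \<noteq> f y0}"
      then obtain y where y1: "y \<in> FixY" "f y \<noteq> f y0" "m \<in> f y" by blast
      then obtain t where "m = cl y t" by blast
      with y1 have yt: "y \<in> FixY" "f y \<noteq> f y0" "m = cl y t" by blast+
      have yS: "y \<in> S" using yt by simp
      have "m \<in> FixM" using class_FixM[OF yS, of t] yt by simp
      moreover have "m \<notin> f y0"
      proof
        assume "m \<in> f y0"
        then obtain s where "cl y t = cl y0 s" using yt by auto
        then obtain k where "y = I k y0" using class_eq[OF bT y0S yS] by metis
        then have "f y = f y0" using f_I[OF y0S] by simp
        then show False using yt by simp
      qed
      ultimately show "m \<in> FixM - f y0" by blast
    qed
  qed
  have "openin Z (FixM - f y0)"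
    unfolding eq using fix_open by (auto simp: Z_def intro!: openin_Union)
  then have cl: "closedin Z (f y0)" using sub tZ by (simp add: closedin_def)
  define x0 where "x0 = cl y0 0"
  have x0: "x0 \<in> f y0" by (auto simp: x0_def)
  then have x0Z: "x0 \<in> topspace Z" using sub tZ by blast
  define C where "C = connected_component_of_set Z x0"
  have Cc: "C \<in> connected_components_of Z"
    unfolding C_def using x0Z connected_component_in_connected_components_of by metis
  have "f y0 \<subseteq> C" unfolding C_def by (rule connected_component_of_maximal[OF conn x0])
  moreover have "C \<subseteq> f y0"
  proof -
    have "C \<subseteq> f y0 \<or> disjnt C (f y0)"
      by (rule connectedin_clopen_cases[OF connectedin_connected_components_of[OF Cc] cl op])
    moreover have "x0 \<in> C" unfolding C_def using x0Z by (simp add: connected_component_of_refl)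
    ultimately show ?thesis using x0 by (auto simp: disjnt_def)
  qed
  ultimately have "f y0 = C" by blast
  then show ?thesis using Cc by (simp add: Z_def)
qed

end



context susp_setting
begin

lemma orbit_finite_of_compact:
  assumes H: "subgroup H G" "compactin Gtop H" "g \<in> H" and y1: "y1 \<in> FixY"
  shows "finite (range (\<lambda>k. I k y1))"
proof -
  have y1S: "y1 \<in> S" using y1 by simp
  define Ob where "Ob = (\<lambda>a. act a y1) ` H"
  have Oc: "compactin Y Ob" unfolding Ob_def by (rule image_compactin[OF H(2) act_cont[OF y1S]])
  have "continuous_map Y Y (act gi \<circ> I n)"
    by (rule continuous_map_compose[OF I_cont[OF bT cT cTi] act_cont2[OF gi_in]])
  from closedin_continuous_maps_eq[OF HY this continuous_map_id]
  have Fc: "closedin Y FixY" by simp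
  have Kc: "compactin Y (FixY \<inter> Ob)" by (rule closed_Int_compactin[OF Fc Oc])
  have ne: "FixY \<noteq> {}" using y1 by blast
  have "compactin (subtopology Y FixY) (FixY \<inter> Ob)" using Kc by (simp add: compactin_subtopology)
  then have "compactin (discrete_topology FixY) (FixY \<inter> Ob)" by (simp only: disc'[OF ne])
  then have finK: "finite (FixY \<inter> Ob)" by (simp add: compactin_discrete_topology)
  have powH: "g [^]\<^bsub>G\<^esub> j \<in> H" for j :: nat
  proof (induction j)
    case 0 then show ?case using subgroup.one_closed[OF H(1)] by simp
  next
    case (Suc j)
    have "g [^]\<^bsub>G\<^esub> Suc j = g [^]\<^bsub>G\<^esub> j \<otimes>\<^bsub>G\<^esub> g"
      using monoid.nat_pow_Suc[OF group.is_monoid[OF grp]] by simp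
    then show ?case using subgroup.m_closed[OF H(1) Suc H(3)] by simp
  qed
  have "range (\<lambda>j::nat. I (n * int j) y1) \<subseteq> FixY \<inter> Ob"
  proof
    fix z assume "z \<in> range (\<lambda>j::nat. I (n * int j) y1)"
    then obtain j :: nat where z: "z = I (n * int j) y1" by blast
    have "z = act (g [^]\<^bsub>G\<^esub> j) y1" using pow_act[OF y1] z by simp
    then have "z \<in> Ob" using powH unfolding Ob_def by blast
    moreover have "z \<in> FixY" using FixY_I[OF y1] z by blast
    ultimately show "z \<in> FixY \<inter> Ob" by blast
  qed
  then have fin: "finite (range (\<lambda>j::nat. I (n * int j) y1))" using finK finite_subset by blast
  have "\<not> inj (\<lambda>j::nat. I (n * int j) y1)"
  proof
    assume "inj (\<lambda>j::nat. I (n * int j) y1)"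
    then have "finite (UNIV :: nat set)" using finite_imageD fin by blast
    then show False by simp
  qed
  then obtain j1 j2 :: nat where j: "j1 \<noteq> j2" "I (n * int j1) y1 = I (n * int j2) y1"
    unfolding inj_def by blast
  define p where "p = - (n * int j1) + n * int j2"
  have "I p y1 = I (- (n * int j1)) (I (n * int j2) y1)" unfolding p_def by (rule I_add[OF bT y1S])
  also have "\<dots> = I (- (n * int j1)) (I (n * int j1) y1)" using j by simp
  also have "\<dots> = y1" by (rule I_cancel[OF bT y1S])
  finally have Ip: "I p y1 = y1" .
  have "p \<noteq> 0" using j n_nz unfolding p_def by auto
  then show ?thesis by (rule periodic_finite[OF y1S Ip])
qed

lemma dir1:
  assumes H: "subgroup H G" "compactin Gtop H" "g \<in> H"
  shows "\<forall>C \<in> connected_components_of (subtopology Q FixM). finite {y \<in> FixY. f y = C}"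
proof
  fix C
  show "finite {y \<in> FixY. f y = C}"
  proof (cases "{y \<in> FixY. f y = C} = {}")
    case True then show ?thesis by (metis finite.emptyI)
  next
    case False
    then obtain y1 where y1: "y1 \<in> FixY" "f y1 = C" by blast
    have y1S: "y1 \<in> S" using y1 by simp
    have "{y \<in> FixY. f y = C} \<subseteq> range (\<lambda>k. I k y1)"
    proof
      fix y assume "y \<in> {y \<in> FixY. f y = C}"
      then have "y \<in> S" "f y = f y1" using y1 by auto
      then show "y \<in> range (\<lambda>k. I k y1)" using f_eq[OF y1S] by blast
    qed
    then show ?thesis using orbit_finite_of_compact[OF H y1(1)] finite_subset by blast
  qed
qed

lemma dir2:
  assumes L: "\<forall>C \<in> connected_components_of (subtopology Q FixM). finite {y \<in> FixY. f y = C}"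
  shows "\<exists>H. subgroup H G \<and> compactin Gtop H \<and> g \<in> H"
proof -
  obtain y0 where y0: "y0 \<in> FixY" using exists_fix by blast
  have y0S: "y0 \<in> S" using y0 by simp
  have "finite {y \<in> FixY. f y = f y0}" using L comp[OF y0] by blast
  moreover have "range (\<lambda>k. I k y0) \<subseteq> {y \<in> FixY. f y = f y0}"
  proof
    fix z assume "z \<in> range (\<lambda>k. I k y0)"
    then obtain k where z: "z = I k y0" by blast
    show "z \<in> {y \<in> FixY. f y = f y0}"
      unfolding z using FixY_I[OF y0, of k] f_I[OF y0S, of k] by blast
  qed
  ultimately have finR: "finite (range (\<lambda>k. I k y0))" using finite_subset by blast
  define Ob where "Ob = range (\<lambda>j::nat. act (g [^]\<^bsub>G\<^esub> j) y0)"
  have "Ob \<subseteq> range (\<lambda>k. I k y0)" unfolding Ob_def using pow_act[OF y0] by auto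
  then have finO: "finite Ob" using finR finite_subset by blast
  have powc: "g [^]\<^bsub>G\<^esub> j \<in> carrier G" for j :: nat
    using monoid.nat_pow_closed[OF group.is_monoid[OF grp] g_in] .
  have OS: "Ob \<subseteq> S" unfolding Ob_def using actS[OF powc y0S] by blast
  have "act (g [^]\<^bsub>G\<^esub> (0::nat)) y0 = y0"
    using act1 y0S by (simp add: monoid.nat_pow_0[OF group.is_monoid[OF grp]])
  then have y0O: "y0 \<in> Ob" unfolding Ob_def by (metis rangeI)
  define H where "H = {a \<in> carrier G. \<forall>x\<in>Ob. act a x \<in> Ob}"
  have gH: "g \<in> H"
    unfolding H_def
  proof (intro CollectI conjI ballI g_in)
    fix x assume "x \<in> Ob"
    then obtain j :: nat where x: "x = act (g [^]\<^bsub>G\<^esub> j) y0" unfolding Ob_def by blast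
    have "act (g \<otimes>\<^bsub>G\<^esub> g [^]\<^bsub>G\<^esub> j) y0 = act g (act (g [^]\<^bsub>G\<^esub> j) y0)"
      using actm g_in powc[of j] y0S by blast
    then have "act g x = act (g \<otimes>\<^bsub>G\<^esub> g [^]\<^bsub>G\<^esub> j) y0" using x by simp
    also have "\<dots> = act (g [^]\<^bsub>G\<^esub> Suc j) y0"
      by (simp only: monoid.nat_pow_Suc2[OF group.is_monoid[OF grp] g_in])
    finally show "act g x \<in> Ob" unfolding Ob_def by (metis rangeI)
  qed
  have sg: "subgroup H G"
  proof (rule group.subgroupI[OF grp])
    show "H \<subseteq> carrier G" unfolding H_def by blast
    show "H \<noteq> {}" using gH by blast
  next
    fix a assume a: "a \<in> H"
    then have aG: "a \<in> carrier G" and aO: "act a ` Ob \<subseteq> Ob" unfolding H_def by auto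
    have "inj_on (act a) Ob"
    proof (rule inj_onI)
      fix x z assume h: "x \<in> Ob" "z \<in> Ob" "act a x = act a z"
      have xS: "x \<in> S" using h(1) OS by blast
      have zS: "z \<in> S" using h(2) OS by blast
      from inv_cancel1[OF aG xS] inv_cancel1[OF aG zS] h(3) show "x = z" by metis
    qed
    then have im: "act a ` Ob = Ob" using endo_inj_surj[OF finO aO] by blast
    show "inv\<^bsub>G\<^esub> a \<in> H"
      unfolding H_def
    proof (intro CollectI conjI ballI)
      show "inv\<^bsub>G\<^esub> a \<in> carrier G" using group.inv_closed[OF grp aG] .
      fix x assume "x \<in> Ob"
      then obtain w where w: "w \<in> Ob" "x = act a w" using im by blast
      have wS: "w \<in> S" using w(1) OS by blast
      show "act (inv\<^bsub>G\<^esub> a) x \<in> Ob" using w inv_cancel1[OF aG wS] by simp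
    qed
  next
    fix a b assume ab: "a \<in> H" "b \<in> H"
    then have aG: "a \<in> carrier G" and bG: "b \<in> carrier G"
      and aO: "\<forall>x\<in>Ob. act a x \<in> Ob" and bO: "\<forall>x\<in>Ob. act b x \<in> Ob" unfolding H_def by blast+
    have abG: "a \<otimes>\<^bsub>G\<^esub> b \<in> carrier G" by (rule monoid.m_closed[OF group.is_monoid[OF grp] aG bG])
    have "\<forall>x\<in>Ob. act (a \<otimes>\<^bsub>G\<^esub> b) x \<in> Ob"
    proof
      fix x assume x: "x \<in> Ob"
      then have xS: "x \<in> S" using OS by blast
      have "act (a \<otimes>\<^bsub>G\<^esub> b) x = act a (act b x)" using actm aG bG xS by blast
      then show "act (a \<otimes>\<^bsub>G\<^esub> b) x \<in> Ob" using aO bO x by simp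
    qed
    then show "a \<otimes>\<^bsub>G\<^esub> b \<in> H" unfolding H_def using abG by blast
  qed
  have HG: "H \<subseteq> carrier G" unfolding H_def by blast
  have Oclosed: "closedin Y Ob"
    by (rule compactin_imp_closedin[OF HY finite_imp_compactin[OF OS finO]])
  have Heq: "H = (\<Inter>x\<in>Ob. {a \<in> topspace Gtop. act a x \<in> Ob})"
    unfolding H_def gtop using y0O by blast
  have Hcl: "closedin Gtop H"
    unfolding Heq
  proof (rule closedin_Inter)
    show "(\<lambda>x. {a \<in> topspace Gtop. act a x \<in> Ob}) ` Ob \<noteq> {}" using y0O by blast
  next
    fix W assume "W \<in> (\<lambda>x. {a \<in> topspace Gtop. act a x \<in> Ob}) ` Ob"
    then obtain x where x: "x \<in> Ob" "W = {a \<in> topspace Gtop. act a x \<in> Ob}" by blast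
    show "closedin Gtop W" unfolding x(2)
      by (rule closedin_continuous_map_preimage[OF act_cont Oclosed]) (use x OS in blast)
  qed
  have "compactin (prod_topology Y Y) (Ob \<times> {y0})"
    using OS y0S finO by (intro finite_imp_compactin) auto
  from compactin_proper_map_preimage[OF prp this]
  have Pc: "compactin (prod_topology Gtop Y)
      {x. x \<in> topspace (prod_topology Gtop Y) \<and> (case x of (a, y) \<Rightarrow> (act a y, y)) \<in> Ob \<times> {y0}}" .
  have Kc: "compactin Gtop (fst ` {x. x \<in> topspace (prod_topology Gtop Y) \<and> (case x of (a, y) \<Rightarrow> (act a y, y)) \<in> Ob \<times> {y0}})"
    by (rule image_compactin[OF Pc continuous_map_fst])
  have "H \<subseteq> fst ` {x. x \<in> topspace (prod_topology Gtop Y) \<and> (case x of (a, y) \<Rightarrow> (act a y, y)) \<in> Ob \<times> {y0}}"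
  proof
    fix a assume a: "a \<in> H"
    then have "(a, y0) \<in> {x. x \<in> topspace (prod_topology Gtop Y) \<and> (case x of (a, y) \<Rightarrow> (act a y, y)) \<in> Ob \<times> {y0}}"
    proof -
      have aG: "a \<in> carrier G" and "act a y0 \<in> Ob" using a y0O unfolding H_def by blast+
      then show ?thesis using gtop y0S by (simp add: topspace_prod_topology)
    qed
    then show "a \<in> fst ` {x. x \<in> topspace (prod_topology Gtop Y) \<and> (case x of (a, y) \<Rightarrow> (act a y, y)) \<in> Ob \<times> {y0}}"
      by (rule rev_image_eqI) simp
  qed
  then have "compactin Gtop H" by (rule closed_compactin[OF Kc _ Hcl])
  then show ?thesis using sg gH by blast
qed

end


theorem corollary5p8:
  fixes G :: "('g,'b) monoid_scheme" and Gtop :: "'g topology"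
    and Y :: "'y topology" and A :: "('y,'n::finite) chart set"
    and act :: "'g \<Rightarrow> 'y \<Rightarrow> 'y" and T :: "'y \<Rightarrow> 'y" and g :: 'g and n :: int
  assumes lcg: "locally_compact_group G Gtop"
    and mfd: "smooth_manifold Y A"
    and action: "proper_cocompact_smooth_action G Gtop Y A act"
    and T_diffeo: "diffeomorphism Y A T"
    and T_comm: "\<forall>a\<in>carrier G. \<forall>y\<in>topspace Y. T (act a y) = act a (T y)"
    and g_in: "g \<in> carrier G"
    and fix_discrete: "\<forall>k::int. k \<noteq> 0 \<longrightarrow>
          (let F = (\<lambda>y. act (inv\<^bsub>G\<^esub> g) (int_iter (topspace Y) T k y));
               Fix = {y \<in> topspace Y. F y = y}
           in (Fix = {} \<or> subtopology Y Fix = discrete_topology Fix) \<and>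
              (\<forall>y\<in>Fix. nondegenerate_fixpoint Y A F y))"
    and n_in_L: "real_of_int n \<in> L_set Y T act g"
  shows "(let FixY = {y \<in> topspace Y. act (inv\<^bsub>G\<^esub> g) (int_iter (topspace Y) T n y) = y};
              M = susp (topspace Y) T;
              FixM = {m \<in> M. susp_act act (inv\<^bsub>G\<^esub> g) (susp_flow (of_int n) m) = m};
              f = (\<lambda>y. {susp_class (topspace Y) T y t | t. True})
          in (\<forall>C \<in> connected_components_of (subtopology (susp_top Y T) FixM).
                 finite {y \<in> FixY. f y = C}))
         \<longleftrightarrow> (\<exists>H. subgroup H G \<and> compactin Gtop H \<and> g \<in> H)"
proof -
  have nz: "n \<noteq> 0" using n_in_L by (simp add: L_set_def)
  have disc: "{y \<in> topspace Y. act (inv\<^bsub>G\<^esub> g) (int_iter (topspace Y) T n y) = y} = {} \<or>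
       subtopology Y {y \<in> topspace Y. act (inv\<^bsub>G\<^esub> g) (int_iter (topspace Y) T n y) = y}
         = discrete_topology {y \<in> topspace Y. act (inv\<^bsub>G\<^esub> g) (int_iter (topspace Y) T n y) = y}"
    using fix_discrete nz unfolding Let_def by blast
  have L1: "group G" "topspace Gtop = carrier G" "Hausdorff_space Gtop"
    using lcg unfolding locally_compact_group_def by blast+
  have L2: "Hausdorff_space Y" using mfd unfolding smooth_manifold_def by blast
  have L3: "bij_betw T (topspace Y) (topspace Y)" "continuous_map Y Y T"
     "continuous_map Y Y (inv_into (topspace Y) T)"
    using T_diffeo unfolding diffeomorphism_def smooth_map_def by blast+
  have L4: "\<forall>y\<in>topspace Y. act \<one>\<^bsub>G\<^esub> y = y"
    "\<forall>a\<in>carrier G. \<forall>b\<in>carrier G. \<forall>y\<in>topspace Y. act (a \<otimes>\<^bsub>G\<^esub> b) y = act a (act b y)"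
    "continuous_map (prod_topology Gtop Y) Y (\<lambda>(a,y). act a y)"
    "proper_map (prod_topology Gtop Y) (prod_topology Y Y) (\<lambda>(a,y). (act a y, y))"
    using action unfolding proper_cocompact_smooth_action_def by blast+
  have L: "susp_setting G Gtop Y act T g n"
    unfolding susp_setting_def
    using L1 L2 L3 L4 T_comm g_in disc n_in_L by blast
  show ?thesis
    unfolding Let_def
    using susp_setting.dir1[OF L] susp_setting.dir2[OF L] by blast
qed

end
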